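(* For all $s\ge1$, $\sum_{k=0}^{3}P_k(s)\,E(s+k,0)=0$, where $P_0(s)=2s^3+s^2-8s+5$, $P_1(s)=-26s^3-93s^2-82s-30$, $P_2(s)=-26s^3-141s^2-226s-81$, $P_3(s)=2s^3+17s^2+40s+16$.
   Context: A $p$-string of length $s$ is a correctly matched string of $s$ pairs of parentheses; there are $C_s=\frac{1}{s+1}\binom{2s}{s}$ of them. Given $p$-strings $U$ (upper), $W$ (lower) of length $s$, the meander graph $\Gamma^1_{2s-1}$ is obtained by marking points $0,1,\dots,2s$ on the $x$-axis, taking the segment $[0,2s]$, joining points $a,b$ by an upper semicircle for each matched pair of $U$ at positions $a<b$ (positions $1,\dots,2s$), and points $a-1,b-1$ by a lower semicircle for each matched pair of $W$ at positions $a<b$; the vertices are $1,\dots,2s-1$. A pierced circle at position $i$ ($1\le i\le2s-2$) is present if vertices $i,i+1$ are joined both by an upper and a lower semicircle. $E(s,0)$ is the number of pairs $(U,W)$ whose meander graph has no pierced circle; equivalently $E(s,0)=\sum_{m=0}^{s}(-1)^m\binom{2s-m-1}{m}C_{s-m}^2$. *)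

theory Defs
  imports Main
begin

definition catalan :: "nat \<Rightarrow> int" where
  "catalan n = int ((2*n choose n) div (n+1))"

definition E0 :: "nat \<Rightarrow> int" where
  "E0 s = (\<Sum>m=0..s. (-1)^m * int ((2*s - m - 1) choose m) * (catalan (s - m))^2)"

end

theory Submission
  imports Defs Complex_Main
begin

definition cq :: "nat \<Rightarrow> rat" where "cq n = fact (2*n) / (fact n * fact (Suc n))"

lemma catalan_cq: "of_int (catalan n) = cq n"
proof -
  have d: "Suc n dvd (2*n choose n)"
  proof (cases n)
    case 0 then show ?thesis by simp
  next
    case (Suc m)
    have h: "Suc (n+m) = 2*n" using Suc by simp
    have "Suc n * (Suc (n + m) choose Suc n) = Suc m * (Suc (n + m) choose n)"
      by (rule Suc_times_binomial_add)
    hence e: "Suc n * (2*n choose Suc n) = n * (2*n choose n)" unfolding h using Suc by simp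
    have "(2*n choose n) = Suc n * (2*n choose n) - n * (2*n choose n)" by simp
    also have "\<dots> = Suc n * ((2*n choose n) - (2*n choose Suc n))"
      using e by (simp add: diff_mult_distrib2)
    finally show ?thesis by (metis dvd_triv_left)
  qed
  then obtain q where q: "(2*n choose n) = Suc n * q" by blast
  have dq: "(2*n choose n) div Suc n = q" unfolding q
    by (metis nonzero_mult_div_cancel_left Suc_neq_Zero)
  have "catalan n = int q" unfolding catalan_def using dq by simp
  moreover have "(of_nat (2*n choose n) :: rat) = fact (2*n) / (fact n * fact n)"
    using binomial_fact[of n "2*n"] by simp
  moreover have "fact (Suc n) = (of_nat n + 1) * (fact n :: rat)" by (simp add: fact_Suc)
  ultimately show ?thesis unfolding cq_def using q
    by (simp add: divide_simps) (simp add: algebra_simps)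
qed

lemma cq_Suc: "cq (Suc n) = 2 * (2 * of_nat n + 1) * cq n / (of_nat n + 2)"
proof -
  have a: "fact (2 * Suc n) = (2*of_nat n + 2) * (2*of_nat n + 1) * (fact (2*n) :: rat)"
  proof -
    have "2 * Suc n = Suc (Suc (2*n))" by simp
    thus ?thesis by (simp only: fact_Suc) (simp add: algebra_simps)
  qed
  have b: "fact (Suc n) = (of_nat n + 1) * (fact n :: rat)" by (simp add: fact_Suc)
  have c: "fact (Suc (Suc n)) = (of_nat n + 2) * (of_nat n + 1) * (fact n :: rat)" 
    by (simp only: fact_Suc) (simp add: algebra_simps)
  have nz: "(of_nat n + 1 :: rat) \<noteq> 0" "(of_nat n + 2 :: rat) \<noteq> 0" "(fact n :: rat) \<noteq> 0"
    by (simp_all add: add_nonneg_pos)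
  show ?thesis unfolding cq_def a b c using nz by (simp add: divide_simps) (simp add: algebra_simps)
qed

definition Hq :: "nat \<Rightarrow> nat \<Rightarrow> rat" where
  "Hq s a = (-1)^a * cq a ^2 * fact (s+a-1) / (fact (2*a-1) * fact (s+3-a))"

definition v :: "nat \<Rightarrow> nat \<Rightarrow> int" where
  "v n a = (if a \<le> n then (-1)^a * int ((n+a-1) choose (n-a)) * catalan a ^2 else 0)"

lemma vlem: "of_int (v (Suc b + i) (Suc b)) =
   (-1)^(Suc b) * cq (Suc b)^2 * fact (2*b+1+i) / (fact i * fact (2*b+1))"
proof -
  have bf: "(of_nat ((2*b+1+i) choose i) :: rat) = fact (2*b+1+i) / (fact i * fact (2*b+1))"
    using binomial_fact[of i "2*b+1+i"] by simp
  have "v (Suc b + i) (Suc b) = (-1)^(Suc b) * int ((2*b+1+i) choose i) * catalan (Suc b)^2"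
    unfolding v_def by (simp add: mult_2 add_ac)
  hence "(of_int (v (Suc b + i) (Suc b)) :: rat) = (-1)^(Suc b) * of_nat ((2*b+1+i) choose i) * cq (Suc b)^2"
    by (simp add: catalan_cq[symmetric])
  thus ?thesis unfolding bf by simp
qed

lemma vzero: "n < a \<Longrightarrow> v n a = 0" by (simp add: v_def)

lemma Hq_Suc:
  assumes "b \<le> s+1"
  shows "Hq s (Suc (Suc b)) * ((of_nat b+1)*(of_nat b+3)^2) =
    Hq s (Suc b) * ((-2)*(2*of_nat b+3)*(of_nat s+of_nat b+1)*(of_nat s + 2 - of_nat b))"
proof -
  obtain j where j: "s+1 = b+j" using assms le_Suc_ex by (metis add.commute add_Suc_right)
  have e1: "s+3-Suc b = Suc j" "s + 3 - Suc(Suc b) = j" "s + Suc b - 1 = s+b"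
     "s + Suc (Suc b) - 1 = Suc (s+b)" "2 * Suc b - 1 = 2*b+1" "2 * Suc (Suc b) - 1 = Suc (Suc (2*b+1))"
    using j by auto
  have js: "(of_nat j :: rat) = of_nat s + 1 - of_nat b" using j
    by (metis add_diff_cancel_left' of_nat_add of_nat_1)
  have c: "cq (Suc (Suc b)) = 2 * (2 * of_nat b + 3) * cq (Suc b) / (of_nat b + 3)"
    using cq_Suc[of "Suc b"] by (simp add: algebra_simps)
  have f1: "fact (Suc j) = (of_nat j + 1) * (fact j :: rat)" by (simp add: fact_Suc)
  have f2: "fact (Suc (s+b)) = (of_nat s + of_nat b + 1) * (fact (s+b) :: rat)" by (simp add: fact_Suc)
  have f3: "fact (Suc (Suc (2*b+1))) = (2*of_nat b + 3) * (2*of_nat b + 2) * (fact (2*b+1) :: rat)"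
    by (simp only: fact_Suc) (simp add: algebra_simps)
  have gen: "\<And>X F1 F2 F3 B S J \<sigma>::rat. F1 \<noteq> 0 \<Longrightarrow> F2 \<noteq> 0 \<Longrightarrow> F3 \<noteq> 0 \<Longrightarrow> B \<ge> 0 \<Longrightarrow> J \<ge> 0 \<Longrightarrow>
     J = S + 1 - B \<Longrightarrow>
     \<sigma> * (2 * (2 * B + 3) * X / (B + 3))^2 * ((S + B + 1) * F1) / ((2 * B + 3) * (2 * B + 2) * F2 * F3) * ((B+1)*(B+3)^2)
     = - \<sigma> * X^2 * F1 / (F2 * ((J + 1) * F3)) * ((-2)*(2*B+3)*(S+B+1)*(S+2-B))"
    by (simp add: divide_simps power2_eq_square) (simp add: algebra_simps)
  have sg: "(-1::rat)^Suc(Suc b) = (-1)^b" "(-1::rat)^Suc b = - ((-1)^b)" by simp_all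
  show ?thesis unfolding Hq_def e1 c f1 f2 f3 sg
    apply (rule gen)
    using js by simp_all
qed


lemma Hq_unf:
  assumes "b \<le> s+2"
  shows "Hq s (Suc b) = (-1)^(Suc b) * cq (Suc b)^2 * fact (s+b) / (fact (2*b+1) * fact (s+2-b))"
proof -
  have "s + Suc b - 1 = s+b" "2 * Suc b - 1 = 2*b+1" "s+3-Suc b = s+2-b" using assms by auto
  thus ?thesis unfolding Hq_def by simp
qed

lemma v3:
  assumes "b \<le> s+2"
  shows "of_int (v (s+3) (Suc b)) = Hq s (Suc b) *
    ((of_nat s + of_nat b + 1)*(of_nat s + of_nat b + 2)*(of_nat s + of_nat b + 3))"
proof -
  obtain i where i: "s+3 = Suc b + i" "i = s+2-b" using assms by auto
  define G where "G = (fact (2*b+1) :: rat)"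
  define F where "F = (fact (s+b) :: rat)"
  define Fi where "Fi = (fact i :: rat)"
  have nz: "G \<noteq> 0" "F \<noteq> 0" "Fi \<noteq> 0" unfolding G_def F_def Fi_def by simp_all
  have e: "2*b+1+i = Suc (Suc (Suc (s+b)))" using i by arith
  have A: "of_int (v (s+3) (Suc b)) = (-1)^(Suc b) * cq (Suc b)^2 * fact (2*b+1+i) / (Fi * G)"
    unfolding i(1) G_def Fi_def by (rule vlem)
  have B: "fact (2*b+1+i) = (of_nat s + of_nat b + 1)*(of_nat s + of_nat b + 2)*(of_nat s + of_nat b + 3) * F"
    unfolding e F_def by (simp only: fact_Suc) (simp add: algebra_simps)
  have H: "Hq s (Suc b) = (-1)^(Suc b) * cq (Suc b)^2 * F / (G * Fi)"
    unfolding Hq_unf[OF assms] i(2)[symmetric] F_def G_def Fi_def ..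
  show ?thesis unfolding A B H using nz by (simp add: field_simps)
qed

lemma v2:
  assumes "b \<le> s+2"
  shows "of_int (v (s+2) (Suc b)) = Hq s (Suc b) *
    ((of_nat s + of_nat b + 1)*(of_nat s + of_nat b + 2)*(of_nat s + 2 - of_nat b))"
proof (cases "b = s+2")
  case True
  thus ?thesis by (simp add: vzero)
next
  case False
  obtain i where i: "s+2 = Suc b + i" "s+2-b = Suc i"
  proof -
    have "b \<le> s+1" using assms False by simp
    thus ?thesis using that[of "s+1-b"] by simp
  qed
  have J: "(of_nat s + 2 - of_nat b :: rat) = of_nat i + 1"
  proof -
    have "(of_nat (s+2) :: rat) = of_nat (Suc b + i)" using i(1) by simp
    thus ?thesis by (simp add: algebra_simps)
  qed
  define G where "G = (fact (2*b+1) :: rat)"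
  define F where "F = (fact (s+b) :: rat)"
  define Fi where "Fi = (fact i :: rat)"
  have nz: "G \<noteq> 0" "F \<noteq> 0" "Fi \<noteq> 0" "(of_nat i + 1 :: rat) \<noteq> 0" unfolding G_def F_def Fi_def by simp_all
  have e: "2*b+1+i = Suc (Suc (s+b))" using i by arith
  have A: "of_int (v (s+2) (Suc b)) = (-1)^(Suc b) * cq (Suc b)^2 * fact (2*b+1+i) / (Fi * G)"
    unfolding i(1) G_def Fi_def by (rule vlem)
  have B: "fact (2*b+1+i) = (of_nat s + of_nat b + 1)*(of_nat s + of_nat b + 2) * F"
    unfolding e F_def by (simp only: fact_Suc) (simp add: algebra_simps)
  have H: "Hq s (Suc b) = (-1)^(Suc b) * cq (Suc b)^2 * F / (G * ((of_nat i + 1) * Fi))"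
    unfolding Hq_unf[OF assms] i(2) F_def G_def Fi_def by (simp add: fact_Suc)
  show ?thesis unfolding A B H J using nz by (simp add: divide_simps)
qed

lemma v1:
  assumes "b \<le> s+2"
  shows "of_int (v (s+1) (Suc b)) = Hq s (Suc b) *
    ((of_nat s + of_nat b + 1)*(of_nat s + 1 - of_nat b)*(of_nat s + 2 - of_nat b))"
proof (cases "b \<ge> s+1")
  case True
  hence "b = s+1 \<or> b = s+2" using assms by auto
  thus ?thesis by (auto simp add: vzero)
next
  case False
  obtain i where i: "s+1 = Suc b + i" "s+2-b = Suc (Suc i)"
  proof -
    have "b \<le> s" using False by simp
    thus ?thesis using that[of "s-b"] by simp
  qed
  have J: "(of_nat s + 1 - of_nat b :: rat) = of_nat i + 1" "(of_nat s + 2 - of_nat b :: rat) = of_nat i + 2"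
  proof -
    have "(of_nat (s+1) :: rat) = of_nat (Suc b + i)" using i(1) by simp
    thus "(of_nat s + 1 - of_nat b :: rat) = of_nat i + 1" "(of_nat s + 2 - of_nat b :: rat) = of_nat i + 2"
      by (simp_all add: algebra_simps)
  qed
  define G where "G = (fact (2*b+1) :: rat)"
  define F where "F = (fact (s+b) :: rat)"
  define Fi where "Fi = (fact i :: rat)"
  have nz: "G \<noteq> 0" "F \<noteq> 0" "Fi \<noteq> 0" "(of_nat i + 1 :: rat) \<noteq> 0" "(of_nat i + 2 :: rat) \<noteq> 0"
    unfolding G_def F_def Fi_def by (simp_all add: add_nonneg_pos)
  have e: "2*b+1+i = Suc (s+b)" using i by arith
  have A: "of_int (v (s+1) (Suc b)) = (-1)^(Suc b) * cq (Suc b)^2 * fact (2*b+1+i) / (Fi * G)"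
    unfolding i(1) G_def Fi_def by (rule vlem)
  have B: "fact (2*b+1+i) = (of_nat s + of_nat b + 1) * F"
    unfolding e F_def by (simp only: fact_Suc) (simp add: algebra_simps)
  have f2: "(fact (Suc (Suc i)) :: rat) = (of_nat i + 2) * ((of_nat i + 1) * Fi)"
    unfolding Fi_def by (simp only: fact_Suc) (simp add: algebra_simps)
  have H: "Hq s (Suc b) = (-1)^(Suc b) * cq (Suc b)^2 * F / (G * ((of_nat i + 2) * ((of_nat i + 1) * Fi)))"
    unfolding Hq_unf[OF assms] i(2) f2 F_def G_def Fi_def ..
  show ?thesis unfolding A B H J using nz by (simp add: divide_simps)
qed

lemma v0:
  assumes "b \<le> s+2"
  shows "of_int (v s (Suc b)) = Hq s (Suc b) *
    ((of_nat s - of_nat b)*(of_nat s + 1 - of_nat b)*(of_nat s + 2 - of_nat b))"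
proof (cases "b \<ge> s")
  case True
  hence "b = s \<or> b = s+1 \<or> b = s+2" using assms by auto
  thus ?thesis by (auto simp add: vzero)
next
  case False
  obtain i where i: "s = Suc b + i" "s+2-b = Suc (Suc (Suc i))"
  proof -
    have "b < s" using False by simp
    thus ?thesis using that[of "s-b-1"] by simp
  qed
  have J: "(of_nat s - of_nat b :: rat) = of_nat i + 1" "(of_nat s + 1 - of_nat b :: rat) = of_nat i + 2"
     "(of_nat s + 2 - of_nat b :: rat) = of_nat i + 3"
  proof -
    have "(of_nat s :: rat) = of_nat (Suc b + i)" using i(1) by simp
    thus "(of_nat s - of_nat b :: rat) = of_nat i + 1" "(of_nat s + 1 - of_nat b :: rat) = of_nat i + 2"
     "(of_nat s + 2 - of_nat b :: rat) = of_nat i + 3"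
      by (simp_all add: algebra_simps)
  qed
  define G where "G = (fact (2*b+1) :: rat)"
  define F where "F = (fact (s+b) :: rat)"
  define Fi where "Fi = (fact i :: rat)"
  have nz: "G \<noteq> 0" "F \<noteq> 0" "Fi \<noteq> 0" "(of_nat i + 1 :: rat) \<noteq> 0" "(of_nat i + 2 :: rat) \<noteq> 0"
    "(of_nat i + 3 :: rat) \<noteq> 0"
    unfolding G_def F_def Fi_def by (simp_all add: add_nonneg_pos)
  have e: "2*b+1+i = s+b" using i by arith
  have A: "of_int (v s (Suc b)) = (-1)^(Suc b) * cq (Suc b)^2 * fact (2*b+1+i) / (Fi * G)"
    unfolding G_def Fi_def using vlem[of b i] i(1) by simp
  have B: "fact (2*b+1+i) = F"
    unfolding e F_def ..
  have f2: "(fact (Suc (Suc (Suc i))) :: rat) = (of_nat i + 3) * ((of_nat i + 2) * ((of_nat i + 1) * Fi))"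
    unfolding Fi_def by (simp only: fact_Suc) (simp add: algebra_simps)
  have H: "Hq s (Suc b) = (-1)^(Suc b) * cq (Suc b)^2 * F / (G * ((of_nat i + 3) * ((of_nat i + 2) * ((of_nat i + 1) * Fi))))"
    unfolding Hq_unf[OF assms] i(2) f2 F_def G_def Fi_def ..
  show ?thesis unfolding A B H J using nz by (simp add: divide_simps)
qed


definition P0 :: "nat \<Rightarrow> int" where "P0 s = 2*int s^3 + int s^2 - 8*int s + 5"
definition P1 :: "nat \<Rightarrow> int" where "P1 s = -26*int s^3 - 93*int s^2 - 82*int s - 30"
definition P2 :: "nat \<Rightarrow> int" where "P2 s = -26*int s^3 - 141*int s^2 - 226*int s - 81"
definition P3 :: "nat \<Rightarrow> int" where "P3 s = 2*int s^3 + 17*int s^2 + 40*int s + 16"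

definition D :: "nat \<Rightarrow> nat \<Rightarrow> int" where
  "D s a = P0 s * v s a - P1 s * v (s+1) a + P2 s * v (s+2) a - P3 s * v (s+3) a"

definition Kq :: "nat \<Rightarrow> rat" where
  "Kq s = (2*of_nat s+1)*(2*of_nat s+3)*(2*of_nat s+5)"

definition Gq :: "nat \<Rightarrow> nat \<Rightarrow> rat" where
  "Gq s a = (if 1 \<le> a \<and> a \<le> s+3 then Hq s a * (2*(of_nat a - 1)*(of_nat a+1)^2 * Kq s) else 0)"

lemma poly_id:
  fixes S B :: rat
  shows "(2*S^3 + S^2 - 8*S + 5) * ((S - B)*(S + 1 - B)*(S + 2 - B))
    - (-26*S^3 - 93*S^2 - 82*S - 30) * ((S + B + 1)*(S + 1 - B)*(S + 2 - B))
    + (-26*S^3 - 141*S^2 - 226*S - 81) * ((S + B + 1)*(S + B + 2)*(S + 2 - B))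
    - (2*S^3 + 17*S^2 + 40*S + 16) * ((S + B + 1)*(S + B + 2)*(S + B + 3))
    = (-4)*(2*B+3)*(S+B+1)*(S+2-B)*((2*S+1)*(2*S+3)*(2*S+5))
      - 2*B*(B+2)^2*((2*S+1)*(2*S+3)*(2*S+5))"
  by (simp add: algebra_simps power2_eq_square power3_eq_cube)

lemma D_tel:
  assumes "b \<le> s+2"
  shows "of_int (D s (Suc b)) = Gq s (Suc (Suc b)) - Gq s (Suc b)"
proof -
  have G1: "Gq s (Suc b) = Hq s (Suc b) * (2*of_nat b*(of_nat b+2)^2 * Kq s)"
    using assms unfolding Gq_def by (simp add: algebra_simps)
  have G2: "Gq s (Suc (Suc b)) = Hq s (Suc b) * ((-4)*(2*of_nat b+3)*(of_nat s+of_nat b+1)*(of_nat s + 2 - of_nat b) * Kq s)"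
  proof (cases "b = s+2")
    case True thus ?thesis unfolding Gq_def by simp
  next
    case False
    hence b1: "b \<le> s+1" using assms by simp
    have "Gq s (Suc (Suc b)) = Hq s (Suc (Suc b)) * ((of_nat b+1)*(of_nat b+3)^2) * (2 * Kq s)"
      using b1 unfolding Gq_def by (simp add: algebra_simps)
    also have "\<dots> = Hq s (Suc b) * ((-2)*(2*of_nat b+3)*(of_nat s+of_nat b+1)*(of_nat s + 2 - of_nat b)) * (2 * Kq s)"
      by (simp only: Hq_Suc[OF b1])
    finally show ?thesis by (simp add: algebra_simps)
  qed
  have "of_int (D s (Suc b)) = Hq s (Suc b) * (
      of_int (P0 s) * ((of_nat s - of_nat b)*(of_nat s + 1 - of_nat b)*(of_nat s + 2 - of_nat b))
    - of_int (P1 s) * ((of_nat s + of_nat b + 1)*(of_nat s + 1 - of_nat b)*(of_nat s + 2 - of_nat b))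
    + of_int (P2 s) * ((of_nat s + of_nat b + 1)*(of_nat s + of_nat b + 2)*(of_nat s + 2 - of_nat b))
    - of_int (P3 s) * ((of_nat s + of_nat b + 1)*(of_nat s + of_nat b + 2)*(of_nat s + of_nat b + 3)))"
    unfolding D_def of_int_add of_int_diff of_int_mult v0[OF assms] v1[OF assms] v2[OF assms] v3[OF assms]
    by (simp add: algebra_simps)
  also have "\<dots> = Hq s (Suc b) * ((-4)*(2*of_nat b+3)*(of_nat s+of_nat b+1)*(of_nat s + 2 - of_nat b)*Kq s
      - 2*of_nat b*(of_nat b+2)^2*Kq s)"
    unfolding P0_def P1_def P2_def P3_def Kq_def using poly_id[of "of_nat s" "of_nat b"] by simp
  finally show ?thesis unfolding G1 G2 by (simp add: algebra_simps)
qed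

lemma E0_v:
  assumes "1 \<le> n" "n \<le> N"
  shows "E0 n = (-1)^n * (\<Sum>a=1..N. v n a)"
proof -
  let ?f = "\<lambda>m. (-1)^m * int ((2*n - m - 1) choose m) * (catalan (n - m))^2"
  have "E0 n = (\<Sum>m=0..n. ?f m)" unfolding E0_def ..
  also have "\<dots> = (\<Sum>a=0..n. ?f (n + 0 - a))" by (rule sum.atLeastAtMost_rev)
  also have "\<dots> = (\<Sum>a=0..n. (-1)^n * v n a)"
  proof (rule sum.cong)
    fix a assume "a \<in> {0..n}"
    hence a: "a \<le> n" by simp
    have s1: "(-1::int)^n = (-1)^(n-a) * (-1)^a" using a by (metis le_add_diff_inverse2 power_add)
    have s2: "(-1::int)^a * (-1)^a = 1" by (simp add: power_mult_distrib[symmetric])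
    have s3: "(-1::int)^(n-a) = (-1)^n * (-1)^a" using s1 s2 by (metis mult.assoc mult.right_neutral)
    have e: "2*n - (n-a) - 1 = n+a-1" "n - (n-a) = a" using a by auto
    show "?f (n + 0 - a) = (-1)^n * v n a" unfolding v_def using a e s3 by simp
  qed simp
  also have "\<dots> = (-1)^n * (\<Sum>a=0..n. v n a)" by (simp add: sum_distrib_left)
  also have "(\<Sum>a=0..n. v n a) = (\<Sum>a=0..N. v n a)"
    by (rule sum.mono_neutral_left) (use assms in \<open>auto simp: vzero\<close>)
  also have "\<dots> = v n 0 + (\<Sum>a=1..N. v n a)" by (simp add: sum.atLeast_Suc_atMost)
  also have "v n 0 = 0" unfolding v_def using assms by simp
  finally show ?thesis by simp
qed

theorem lemma4p2:
  fixes s :: nat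
  assumes "s \<ge> 1"
  shows "(2*int s^3 + int s^2 - 8*int s + 5) * E0 s
       + (-26*int s^3 - 93*int s^2 - 82*int s - 30) * E0 (s+1)
       + (-26*int s^3 - 141*int s^2 - 226*int s - 81) * E0 (s+2)
       + (2*int s^3 + 17*int s^2 + 40*int s + 16) * E0 (s+3) = 0"
proof -
  let ?N = "s+3"
  have e0: "E0 s = (-1)^s * (\<Sum>a=1..?N. v s a)" by (rule E0_v) (use assms in auto)
  have e1: "E0 (s+1) = (-1)^(s+1) * (\<Sum>a=1..?N. v (s+1) a)" by (rule E0_v) (use assms in auto)
  have e2: "E0 (s+2) = (-1)^(s+2) * (\<Sum>a=1..?N. v (s+2) a)" by (rule E0_v) (use assms in auto)
  have e3: "E0 (s+3) = (-1)^(s+3) * (\<Sum>a=1..?N. v (s+3) a)" by (rule E0_v) (use assms in auto)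
  have sumD: "(\<Sum>a=1..?N. D s a) = P0 s * (\<Sum>a=1..?N. v s a) - P1 s * (\<Sum>a=1..?N. v (s+1) a)
     + P2 s * (\<Sum>a=1..?N. v (s+2) a) - P3 s * (\<Sum>a=1..?N. v (s+3) a)"
    unfolding D_def by (simp add: sum.distrib sum_subtractf sum_distrib_left)
  have "(of_int (\<Sum>a=1..?N. D s a) :: rat) = (\<Sum>a=1..?N. of_int (D s a))" by simp
  also have "\<dots> = (\<Sum>a=1..?N. Gq s (Suc a) - Gq s a)"
  proof (rule sum.cong)
    fix a assume "a \<in> {1..?N}"
    then obtain b where b: "a = Suc b" "b \<le> s+2" by (cases a) auto
    show "of_int (D s a) = Gq s (Suc a) - Gq s a" unfolding b(1) by (rule D_tel[OF b(2)])
  qed simp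
  also have "\<dots> = Gq s (Suc ?N) - Gq s 1" by (rule sum_Suc_diff) simp
  also have "\<dots> = 0" unfolding Gq_def by simp
  finally have z0: "(of_int (\<Sum>a=1..?N. D s a) :: rat) = 0" .
  have z: "(\<Sum>a=1..?N. D s a) = 0" using z0 by (simp only: of_int_eq_0_iff)
  have "(-1::int)^(s+1) = (-1) * (-1)^s" "(-1::int)^(s+2) = (-1)^s" "(-1::int)^(s+3) = (-1) * (-1)^s" by (simp_all add: power_add)
  hence "(2*int s^3 + int s^2 - 8*int s + 5) * E0 s
       + (-26*int s^3 - 93*int s^2 - 82*int s - 30) * E0 (s+1)
       + (-26*int s^3 - 141*int s^2 - 226*int s - 81) * E0 (s+2)
       + (2*int s^3 + 17*int s^2 + 40*int s + 16) * E0 (s+3) = (-1)^s * (\<Sum>a=1..?N. D s a)"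
    unfolding e0 e1 e2 e3 sumD P0_def P1_def P2_def P3_def by (simp add: algebra_simps)
  thus ?thesis using z by simp
qed

end
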